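(* Let $\lambda>0$ and let $\mathbf r_\lambda=(\mathbf r_{1\lambda},\dots,\mathbf r_{N\lambda})\in\mathfrak R$ be any point at which $f+\lambda g$ attains its minimum over $\mathfrak R$. Write $\mathbf r_{i\lambda}=(x_{i\lambda},y_{i\lambda})=|\mathbf r_{i\lambda}|(\cos\varphi_{i\lambda},\sin\varphi_{i\lambda})$, put $\omega=\sqrt{2\lambda}$, and define for $t\ge 0$ $$\mathbf r_{i\lambda}(t)=|\mathbf r_{i\lambda}|\big(\cos(\varphi_{i\lambda}+\omega t),\ \sin(\varphi_{i\lambda}+\omega t)\big),\qquad i=1,\dots,N .$$ Then $\mathbf r_\lambda(t)=(\mathbf r_{1\lambda}(t),\dots,\mathbf r_{N\lambda}(t))$, $t\ge0$, is a solution of the equations of motion $m_i\ddot{\mathbf r}_i=\mathbf F_i(\mathbf r)$, $i=1,\dots,N$, with initial conditions $\mathbf r_i(0)=\mathbf r_{i\lambda}$, $\dot{\mathbf r}_i(0)=(-\omega y_{i\lambda},\ \omega x_{i\lambda})$, $i=1,\dots,N$.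
   Context: Fix $N\ge 2$, masses $m_1,\dots,m_N>0$ and a constant $\gamma>0$. The planar configuration space is $\mathfrak R=\{\mathbf r=(\mathbf r_1,\dots,\mathbf r_N)\in(\mathbb R^2)^N:\ \mathbf r_i\neq\mathbf r_j \text{ for } i\neq j\}$. Define $f(\mathbf r)=\sum_{i<j}\frac{\gamma m_im_j}{|\mathbf r_j-\mathbf r_i|}$ and $g(\mathbf r)=\sum_i m_i|\mathbf r_i|^2$ on $\mathfrak R$. The force on particle $i$ is $\mathbf F_i(\mathbf r)=\sum_{j\ne i}\frac{\gamma m_im_j(\mathbf r_j-\mathbf r_i)}{|\mathbf r_j-\mathbf r_i|^3}$. For every $\lambda>0$ the function $f+\lambda g$ attains its minimum on $\mathfrak R$. *)

theory Defs
  imports "HOL-Analysis.Analysis"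
begin

definition config_space :: "nat \<Rightarrow> (nat \<Rightarrow> real \<times> real) set" where
  "config_space N = {r. \<forall>i<N. \<forall>j<N. i \<noteq> j \<longrightarrow> r i \<noteq> r j}"

definition potf :: "nat \<Rightarrow> real \<Rightarrow> (nat \<Rightarrow> real) \<Rightarrow> (nat \<Rightarrow> real \<times> real) \<Rightarrow> real" where
  "potf N \<gamma> m r = (\<Sum>j<N. \<Sum>i<j. \<gamma> * m i * m j / norm (r j - r i))"

definition momg :: "nat \<Rightarrow> (nat \<Rightarrow> real) \<Rightarrow> (nat \<Rightarrow> real \<times> real) \<Rightarrow> real" where
  "momg N m r = (\<Sum>i<N. m i * (norm (r i))\<^sup>2)"

definition force :: "nat \<Rightarrow> real \<Rightarrow> (nat \<Rightarrow> real) \<Rightarrow> (nat \<Rightarrow> real \<times> real) \<Rightarrow> nat \<Rightarrow> real \<times> real" where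
  "force N \<gamma> m r i =
     (\<Sum>j\<in>{..<N} - {i}. (\<gamma> * m i * m j / (norm (r j - r i)) ^ 3) *\<^sub>R (r j - r i))"

end

theory Submission
  imports Defs
begin

definition Qp :: "nat \<Rightarrow> real \<Rightarrow> (nat \<Rightarrow> real) \<Rightarrow> nat \<Rightarrow> (nat \<Rightarrow> real \<times> real) \<Rightarrow> real" where
  "Qp N \<gamma> m i r = (\<Sum>k<N. \<Sum>j<k. if j = i \<or> k = i then 0 else \<gamma> * m j * m k / norm (r k - r j))"

lemma Qp_cong:
  assumes "\<And>j. j \<noteq> i \<Longrightarrow> r' j = r j"
  shows "Qp N \<gamma> m i r' = Qp N \<gamma> m i r"
  unfolding Qp_def using assms by (intro sum.cong refl) auto

lemma potf_split:
  assumes i: "i < N"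
  shows "potf N \<gamma> m r = Qp N \<gamma> m i r + (\<Sum>j\<in>{..<N}-{i}. \<gamma> * m i * m j / norm (r j - r i))"
proof -
  define T where "T = (\<lambda>j k. \<gamma> * m j * m k / norm (r k - r j))"
  have Tsym: "T j k = T k j" for j k
    unfolding T_def by (simp add: norm_minus_commute mult.commute mult.left_commute)
  have "potf N \<gamma> m r = (\<Sum>k<N. \<Sum>j<k. (if j = i \<or> k = i then 0 else T j k) + (if j = i \<or> k = i then T j k else 0))"
    unfolding potf_def T_def by (intro sum.cong refl) auto
  also have "\<dots> = Qp N \<gamma> m i r + (\<Sum>k<N. \<Sum>j<k. if j = i \<or> k = i then T j k else 0)"
    unfolding Qp_def T_def by (simp add: sum.distrib)
  also have "(\<Sum>k<N. \<Sum>j<k. if j = i \<or> k = i then T j k else 0)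
      = (\<Sum>k<N. if k = i then (\<Sum>j<i. T j i) else if i < k then T i k else 0)"
  proof (intro sum.cong refl)
    fix k assume "k \<in> {..<N}"
    show "(\<Sum>j<k. if j = i \<or> k = i then T j k else 0) = (if k = i then (\<Sum>j<i. T j i) else if i < k then T i k else 0)"
    proof (cases "k = i")
      case True then show ?thesis by simp
    next
      case False
      then have "(\<Sum>j<k. if j = i \<or> k = i then T j k else 0) = (\<Sum>j<k. if i = j then T j k else 0)"
        by (intro sum.cong refl) auto
      also have "\<dots> = (if i < k then T i k else 0)" by (simp add: sum.delta)
      finally show ?thesis using False by simp
    qed
  qed
  also have "\<dots> = (\<Sum>j<i. T j i) + (\<Sum>k\<in>{..<N}-{i}. if i < k then T i k else 0)"
    using i by (subst sum.remove[of _ i]) (auto intro!: sum.cong)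
  also have "(\<Sum>j<i. T j i) = (\<Sum>j\<in>{..<N}-{i}. if j < i then T i j else 0)"
  proof -
    have "(\<Sum>j\<in>{..<N}-{i}. if j < i then T i j else 0) = (\<Sum>j\<in>{j\<in>{..<N}-{i}. j < i}. T i j)"
      by (rule sum.inter_filter[symmetric]) simp
    also have "{j\<in>{..<N}-{i}. j < i} = {..<i}" using i by auto
    finally show ?thesis by (simp add: Tsym)
  qed
  also have "(\<Sum>j\<in>{..<N}-{i}. if j < i then T i j else 0) + (\<Sum>k\<in>{..<N}-{i}. if i < k then T i k else 0)
      = (\<Sum>j\<in>{..<N}-{i}. T i j)"
    by (subst sum.distrib[symmetric]) (intro sum.cong refl, auto)
  finally show ?thesis unfolding T_def by simp
qed

lemma momg_split:
  assumes i: "i < N"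
  shows "momg N m r = (\<Sum>k\<in>{..<N}-{i}. m k * (norm (r k))\<^sup>2) + m i * (norm (r i))\<^sup>2"
  unfolding momg_def using i by (subst sum.remove[of _ i]) auto

definition rot :: "real \<Rightarrow> real \<times> real \<Rightarrow> real \<times> real" where
  "rot \<theta> v = (cos \<theta> * fst v - sin \<theta> * snd v, sin \<theta> * fst v + cos \<theta> * snd v)"

lemma rot_diff: "rot \<theta> (u - v) = rot \<theta> u - rot \<theta> v"
  by (simp add: rot_def algebra_simps)

lemma rot_scale: "rot \<theta> (c *\<^sub>R u) = c *\<^sub>R rot \<theta> u"
  by (simp add: rot_def algebra_simps)

lemma rot_add: "rot \<theta> (u + v) = rot \<theta> u + rot \<theta> v"
  by (simp add: rot_def algebra_simps)

lemma rot_sum: "rot \<theta> (sum f A) = sum (\<lambda>x. rot \<theta> (f x)) A"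
proof (induction A rule: infinite_finite_induct)
  case (infinite A) then show ?case by (simp add: rot_def zero_prod_def)
next
  case empty then show ?case by (simp add: rot_def zero_prod_def)
next
  case (insert x F) then show ?case by (simp add: rot_add)
qed

lemma norm_rot: "norm (rot \<theta> v) = norm v"
proof -
  obtain x y where v: "v = (x, y)" by (cases v)
  have "(cos \<theta> * x - sin \<theta> * y)\<^sup>2 + (sin \<theta> * x + cos \<theta> * y)\<^sup>2 = ((sin \<theta>)\<^sup>2 + (cos \<theta>)\<^sup>2) * (x\<^sup>2 + y\<^sup>2)"
    unfolding power2_eq_square by algebra
  then show ?thesis by (simp add: v rot_def norm_Pair)
qed

lemma dinvnorm:
  fixes a e :: "real \<times> real"
  assumes "a \<noteq> 0"
  shows "((\<lambda>h. 1 / norm (a - h *\<^sub>R e)) has_real_derivative (a \<bullet> e) / norm a ^ 3) (at 0)"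
proof -
  define q where "q = (\<lambda>h::real. a \<bullet> a - 2 * h * (a \<bullet> e) + h^2 * (e \<bullet> e))"
  have eq: "(\<lambda>h. 1 / norm (a - h *\<^sub>R e)) = (\<lambda>h. inverse (sqrt (q h)))"
    by (auto simp add: q_def norm_eq_sqrt_inner divide_inverse inner_diff inner_commute algebra_simps power2_eq_square)
  have pos: "a \<bullet> a > 0" using assms by simp
  have q0: "q 0 = a \<bullet> a" by (simp add: q_def)
  have na: "norm a = sqrt (a \<bullet> a)" by (simp add: norm_eq_sqrt_inner)
  have dq: "(q has_real_derivative (- 2 * (a \<bullet> e))) (at 0)"
    unfolding q_def by (auto intro!: derivative_eq_intros)
  have ds: "((\<lambda>h. sqrt (q h)) has_real_derivative (inverse (sqrt (q 0)) / 2) * (- 2 * (a \<bullet> e))) (at 0)"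
    by (rule DERIV_chain2[OF DERIV_real_sqrt dq]) (simp add: q0 pos assms)
  have di: "((\<lambda>h. inverse (sqrt (q h))) has_real_derivative - ((inverse (sqrt (q 0)) / 2) * (- 2 * (a \<bullet> e)) * inverse ((sqrt (q 0)) ^ Suc (Suc 0)))) (at 0)"
    by (rule DERIV_inverse_fun[OF ds]) (simp add: q0 pos assms)
  have "- ((inverse (sqrt (q 0)) / 2) * (- 2 * (a \<bullet> e)) * inverse ((sqrt (q 0)) ^ Suc (Suc 0))) = (a \<bullet> e) / norm a ^ 3"
    using pos by (simp add: q0 na field_simps power3_eq_cube)
  then show ?thesis using eq di by simp
qed

lemma critical:
  assumes i: "i < N"
    and rl_in: "rl \<in> config_space N"
    and rl_min: "\<forall>s\<in>config_space N.
        potf N \<gamma> m rl + lam * momg N m rl \<le> potf N \<gamma> m s + lam * momg N m s"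
  shows "force N \<gamma> m rl i = (-2 * lam * m i) *\<^sub>R rl i"
proof -
  have dir: "force N \<gamma> m rl i \<bullet> e = -2 * lam * m i * (rl i \<bullet> e)" if e: "norm e = 1" for e
  proof -
    define A where "A = {..<N} - {i}"
    have finA: "finite A" unfolding A_def by simp
    define s where "s = (\<lambda>h::real. rl(i := rl i + h *\<^sub>R e))"
    define C where "C = Qp N \<gamma> m i rl + lam * (\<Sum>k\<in>A. m k * (norm (rl k))\<^sup>2)"
    define F where "F = (\<lambda>h. potf N \<gamma> m (s h) + lam * momg N m (s h))"
    have sj: "s h j = rl j" if "j \<noteq> i" for h j using that unfolding s_def by simp
    have si: "s h i = rl i + h *\<^sub>R e" for h unfolding s_def by simp
    have Feq: "F h = C + (\<Sum>j\<in>A. \<gamma> * m i * m j * (1 / norm ((rl j - rl i) - h *\<^sub>R e)))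
        + lam * m i * (rl i \<bullet> rl i + 2 * h * (rl i \<bullet> e) + h^2 * (e \<bullet> e))" for h
    proof -
      have q: "Qp N \<gamma> m i (s h) = Qp N \<gamma> m i rl" by (rule Qp_cong) (simp add: sj)
      have p: "potf N \<gamma> m (s h) = Qp N \<gamma> m i rl + (\<Sum>j\<in>A. \<gamma> * m i * m j * (1 / norm ((rl j - rl i) - h *\<^sub>R e)))"
        unfolding potf_split[OF i, of \<gamma> m "s h"] q A_def
        by (intro arg_cong2[where f="(+)"] refl sum.cong) (auto simp: sj si algebra_simps)
      have n: "(norm (s h i))\<^sup>2 = rl i \<bullet> rl i + 2 * h * (rl i \<bullet> e) + h^2 * (e \<bullet> e)"
        unfolding si power2_norm_eq_inner by (simp add: inner_add inner_commute power2_eq_square algebra_simps)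
      have mo: "momg N m (s h) = (\<Sum>k\<in>A. m k * (norm (rl k))\<^sup>2) + m i * (rl i \<bullet> rl i + 2 * h * (rl i \<bullet> e) + h^2 * (e \<bullet> e))"
        unfolding momg_split[OF i, of m "s h"] A_def n by (auto simp: sj intro!: sum.cong)
      show ?thesis unfolding F_def p mo C_def by (simp add: algebra_simps)
    qed
    have nz: "rl j - rl i \<noteq> 0" if "j \<in> A" for j
      using rl_in that i unfolding config_space_def A_def by auto
    define D where "D = (\<Sum>j\<in>A. \<gamma> * m i * m j * ((rl j - rl i) \<bullet> e / norm (rl j - rl i) ^ 3))
        + lam * m i * (0 + 2 * (rl i \<bullet> e) + 0)"
    have dsum: "((\<lambda>h. \<Sum>j\<in>A. \<gamma> * m i * m j * (1 / norm ((rl j - rl i) - h *\<^sub>R e))) has_real_derivative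
        (\<Sum>j\<in>A. \<gamma> * m i * m j * ((rl j - rl i) \<bullet> e / norm (rl j - rl i) ^ 3))) (at 0)"
      by (rule DERIV_sum, rule DERIV_cmult, rule dinvnorm, rule nz)
    have dq: "((\<lambda>h. lam * m i * (rl i \<bullet> rl i + 2 * h * (rl i \<bullet> e) + h^2 * (e \<bullet> e))) has_real_derivative
        lam * m i * (0 + 2 * (rl i \<bullet> e) + 0)) (at 0)"
      by (auto intro!: derivative_eq_intros)
    have dF: "(F has_real_derivative D) (at 0)"
    proof -
      have "F = (\<lambda>h. C + (\<Sum>j\<in>A. \<gamma> * m i * m j * (1 / norm ((rl j - rl i) - h *\<^sub>R e)))
        + lam * m i * (rl i \<bullet> rl i + 2 * h * (rl i \<bullet> e) + h^2 * (e \<bullet> e)))" using Feq by auto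
      moreover have "((\<lambda>h. C + (\<Sum>j\<in>A. \<gamma> * m i * m j * (1 / norm ((rl j - rl i) - h *\<^sub>R e)))
        + lam * m i * (rl i \<bullet> rl i + 2 * h * (rl i \<bullet> e) + h^2 * (e \<bullet> e))) has_real_derivative 0 + (\<Sum>j\<in>A. \<gamma> * m i * m j * ((rl j - rl i) \<bullet> e / norm (rl j - rl i) ^ 3)) + lam * m i * (0 + 2 * (rl i \<bullet> e) + 0)) (at 0)"
        by (intro DERIV_add DERIV_const dsum dq)
      ultimately show ?thesis unfolding D_def by simp
    qed
    define d where "d = Min (insert 1 ((\<lambda>j. norm (rl j - rl i)) ` A))"
    have dpos: "d > 0" unfolding d_def using finA nz by (subst Min_gr_iff) auto
    have dle: "d \<le> norm (rl j - rl i)" if "j \<in> A" for j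
      unfolding d_def using finA that by (intro Min_le) auto
    have F0: "F 0 = potf N \<gamma> m rl + lam * momg N m rl" unfolding F_def s_def by simp
    have loc: "\<forall>h. \<bar>0 - h\<bar> < d \<longrightarrow> F 0 \<le> F h"
    proof (intro allI impI)
      fix h :: real assume h: "\<bar>0 - h\<bar> < d"
      have "s h \<in> config_space N"
        unfolding config_space_def
      proof (intro CollectI allI impI)
        fix j k assume jk: "j < N" "k < N" "j \<noteq> k"
        have key: "s h i \<noteq> rl l" if "l \<in> A" for l
        proof
          assume "s h i = rl l"
          then have "rl l - rl i = h *\<^sub>R e" by (simp add: si algebra_simps)
          then have "norm (rl l - rl i) = \<bar>h\<bar>" using e by simp
          with dle[OF that] h show False by simp
        qed
        show "s h j \<noteq> s h k"
        proof (cases "j = i")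
          case True
          then show ?thesis using jk key[of k] by (simp add: A_def sj)
        next
          case False
          show ?thesis
          proof (cases "k = i")
            case True
            then show ?thesis using jk key[of j] False by (auto simp add: A_def sj)
          next
            case False2: False
            then show ?thesis using jk False rl_in unfolding config_space_def by (simp add: sj)
          qed
        qed
      qed
      then have "potf N \<gamma> m rl + lam * momg N m rl \<le> F h" using rl_min unfolding F_def by blast
      then show "F 0 \<le> F h" using F0 by simp
    qed
    have D0: "D = 0" by (rule DERIV_local_min[OF dF dpos loc])
    have fe: "force N \<gamma> m rl i \<bullet> e = (\<Sum>j\<in>A. \<gamma> * m i * m j * ((rl j - rl i) \<bullet> e / norm (rl j - rl i) ^ 3))"
      unfolding force_def A_def inner_sum_left inner_scaleR_left by (intro sum.cong refl) simp
    show ?thesis using D0 fe unfolding D_def by (simp add: algebra_simps)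
  qed
  have 1: "force N \<gamma> m rl i \<bullet> (1, 0) = -2 * lam * m i * (rl i \<bullet> (1, 0))" by (rule dir) simp
  have 2: "force N \<gamma> m rl i \<bullet> (0, 1) = -2 * lam * m i * (rl i \<bullet> (0, 1))" by (rule dir) simp
  show ?thesis using 1 2 by (simp add: prod_eq_iff inner_Pair_0)
qed

theorem theorem3p1:
  fixes N :: nat and m :: "nat \<Rightarrow> real" and \<gamma> lam :: real
    and rl :: "nat \<Rightarrow> real \<times> real" and \<phi> :: "nat \<Rightarrow> real"
  assumes N: "N \<ge> 2"
    and m_pos: "\<forall>i<N. m i > 0"
    and gamma_pos: "\<gamma> > 0"
    and lam_pos: "lam > 0"
    and rl_in: "rl \<in> config_space N"
    and rl_min: "\<forall>s\<in>config_space N.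
        potf N \<gamma> m rl + lam * momg N m rl \<le> potf N \<gamma> m s + lam * momg N m s"
    and polar: "\<forall>i<N. rl i = (norm (rl i) * cos (\<phi> i), norm (rl i) * sin (\<phi> i))"
  defines "\<omega> \<equiv> sqrt (2 * lam)"
  defines "R \<equiv> (\<lambda>t i. (norm (rl i) * cos (\<phi> i + \<omega> * t), norm (rl i) * sin (\<phi> i + \<omega> * t)))"
  shows "(\<forall>t\<ge>0. R t \<in> config_space N) \<and>
         (\<exists>V A :: real \<Rightarrow> nat \<Rightarrow> real \<times> real.
            (\<forall>i<N. \<forall>t\<ge>0.
               ((\<lambda>s. R s i) has_vector_derivative V t i) (at t within {0..}) \<and>
               ((\<lambda>s. V s i) has_vector_derivative A t i) (at t within {0..}) \<and>
               m i *\<^sub>R A t i = force N \<gamma> m (R t) i) \<and>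
            (\<forall>i<N. R 0 i = rl i \<and> V 0 i = (- \<omega> * snd (rl i), \<omega> * fst (rl i))))"
proof -
  have omsq: "\<omega>^2 = 2 * lam" unfolding \<omega>_def using lam_pos by simp
  have Rrot: "R t i = rot (\<omega> * t) (rl i)" if i: "i < N" for t i
  proof -
    have p: "rl i = (norm (rl i) * cos (\<phi> i), norm (rl i) * sin (\<phi> i))" using polar i by blast
    show ?thesis
      by (subst p) (simp add: R_def rot_def cos_add sin_add algebra_simps)
  qed
  have nR: "norm (R t k - R t j) = norm (rl k - rl j)" if "j < N" "k < N" for t j k
    using that by (simp add: Rrot rot_diff[symmetric] norm_rot)
  have cfg: "R t \<in> config_space N" for t
    unfolding config_space_def
  proof (intro CollectI allI impI)
    fix j k assume jk: "j < N" "k < N" "j \<noteq> k"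
    then have "rl j \<noteq> rl k" using rl_in unfolding config_space_def by blast
    then have "norm (R t k - R t j) \<noteq> 0" using nR[OF jk(1,2)] by simp
    then show "R t j \<noteq> R t k" by auto
  qed
  have frc: "force N \<gamma> m (R t) i = (-2 * lam * m i) *\<^sub>R R t i" if i: "i < N" for t i
  proof -
    have "force N \<gamma> m (R t) i = (\<Sum>j\<in>{..<N} - {i}. rot (\<omega> * t) ((\<gamma> * m i * m j / (norm (rl j - rl i)) ^ 3) *\<^sub>R (rl j - rl i)))"
      unfolding force_def
    proof (intro sum.cong refl)
      fix j assume j: "j \<in> {..<N} - {i}"
      then have "norm (R t j - R t i) = norm (rl j - rl i)" using nR[of i j t] i by simp
      moreover have "R t j - R t i = rot (\<omega> * t) (rl j - rl i)" using j i by (simp add: Rrot rot_diff)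
      ultimately show "(\<gamma> * m i * m j / (norm (R t j - R t i)) ^ 3) *\<^sub>R (R t j - R t i) =
          rot (\<omega> * t) ((\<gamma> * m i * m j / (norm (rl j - rl i)) ^ 3) *\<^sub>R (rl j - rl i))"
        by (simp add: rot_scale)
    qed
    also have "\<dots> = rot (\<omega> * t) (force N \<gamma> m rl i)" unfolding force_def rot_sum ..
    also have "\<dots> = (-2 * lam * m i) *\<^sub>R R t i"
      unfolding critical[OF i rl_in rl_min] rot_scale Rrot[OF i] ..
    finally show ?thesis .
  qed
  define V where "V = (\<lambda>t i. (- norm (rl i) * \<omega> * sin (\<phi> i + \<omega> * t), norm (rl i) * \<omega> * cos (\<phi> i + \<omega> * t)))"
  define A where "A = (\<lambda>t i. (- norm (rl i) * \<omega>^2 * cos (\<phi> i + \<omega> * t), - norm (rl i) * \<omega>^2 * sin (\<phi> i + \<omega> * t)))"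
  have AR: "A t i = (- 2 * lam) *\<^sub>R R t i" for t i
    unfolding A_def R_def omsq by simp
  have dR: "((\<lambda>s. R s i) has_vector_derivative V t i) (at t within {0..})" for t i
    unfolding R_def V_def
    by (rule has_vector_derivative_Pair;
        rule has_real_derivative_iff_has_vector_derivative[THEN iffD1];
        auto intro!: derivative_eq_intros)
  have dV: "((\<lambda>s. V s i) has_vector_derivative A t i) (at t within {0..})" for t i
    unfolding A_def V_def
    by (rule has_vector_derivative_Pair;
        rule has_real_derivative_iff_has_vector_derivative[THEN iffD1];
        auto intro!: derivative_eq_intros simp: power2_eq_square)
  have init: "R 0 i = rl i \<and> V 0 i = (- \<omega> * snd (rl i), \<omega> * fst (rl i))" if i: "i < N" for i
  proof -
    have p: "rl i = (norm (rl i) * cos (\<phi> i), norm (rl i) * sin (\<phi> i))" using polar i by blast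
    have "R 0 i = (norm (rl i) * cos (\<phi> i), norm (rl i) * sin (\<phi> i))" by (simp add: R_def)
    then have "R 0 i = rl i" using p by simp
    moreover have "V 0 i = (- \<omega> * snd (norm (rl i) * cos (\<phi> i), norm (rl i) * sin (\<phi> i)), \<omega> * fst (norm (rl i) * cos (\<phi> i), norm (rl i) * sin (\<phi> i)))"
      by (simp add: V_def)
    then have "V 0 i = (- \<omega> * snd (rl i), \<omega> * fst (rl i))" using p by simp
    ultimately show ?thesis by simp
  qed
  have main: "\<forall>i<N. \<forall>t\<ge>0.
               ((\<lambda>s. R s i) has_vector_derivative V t i) (at t within {0..}) \<and>
               ((\<lambda>s. V s i) has_vector_derivative A t i) (at t within {0..}) \<and>
               m i *\<^sub>R A t i = force N \<gamma> m (R t) i"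
    using dR dV frc AR by simp
  show ?thesis using main init cfg by blast
qed

end
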